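(* Let $L:\mathbb{R}^d\to\mathbb{R}^{\mathcal{Y}}_+$ be a polyhedral loss, $\ell:\mathcal{R}\to\mathbb{R}^{\mathcal{Y}}_+$ a discrete loss, and $\psi:\mathbb{R}^d\to\mathcal{R}$ a link. Then $(L,\psi)$ is calibrated with respect to $\ell$ if and only if there exists $\epsilon>0$ such that $\psi$ is $\epsilon$-separated with respect to $\mathrm{prop}[L]$ and $\mathrm{prop}[\ell]$.
   Context: $\mathcal{Y}$ is a finite label set, $\Delta_{\mathcal{Y}}$ the probability simplex on $\mathcal{Y}$, $\mathbb{R}^{\mathcal{Y}}_+$ the nonnegative orthant. A loss $L:\mathcal{R}\to\mathbb{R}^{\mathcal{Y}}_+$ has expected loss $\langle p,L(r)\rangle$; it is discrete if $\mathcal{R}$ is finite; $L:\mathbb{R}^d\to\mathbb{R}^{\mathcal{Y}}_+$ is polyhedral if each coordinate is a pointwise maximum of finitely many affine functions of $u$. For a loss whose expected loss attains its infimum for every $p$, $\mathrm{prop}[L](p)=\arg\min_r\langle p,L(r)\rangle$ (polyhedral and discrete losses have this property). $(L,\psi)$ is calibrated with respect to $\ell$ if for all $p\in\Delta_{\mathcal{Y}}$, $\inf_{u:\psi(u)\notin\mathrm{prop}[\ell](p)}\langle p,L(u)\rangle>\inf_{u\in\mathbb{R}^d}\langle p,L(u)\rangle$ (infimum over the empty set is $+\infty$). For properties $\Gamma:\Delta_{\mathcal{Y}}\rightrightarrows\mathbb{R}^d$, $\gamma:\Delta_{\mathcal{Y}}\rightrightarrows\mathcal{R}$, a link $\psi$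 is $\epsilon$-separated with respect to $\Gamma$ and $\gamma$ if for all $u\in\mathbb{R}^d$ and $p\in\Delta_{\mathcal{Y}}$ with $\psi(u)\notin\gamma(p)$ we have $d_\infty(u,\Gamma(p))\ge\epsilon$, where $d_\infty(u,A)=\inf_{a\in A}\|u-a\|_\infty$. *)

theory Defs
  imports "HOL-Analysis.Analysis"
begin

definition prob_simplex :: "('y::finite \<Rightarrow> real) set" where
  "prob_simplex = {p. (\<forall>y. 0 \<le> p y) \<and> (\<Sum>y\<in>UNIV. p y) = 1}"

definition exp_loss :: "('r \<Rightarrow> 'y::finite \<Rightarrow> real) \<Rightarrow> ('y \<Rightarrow> real) \<Rightarrow> 'r \<Rightarrow> real" where
  "exp_loss L p r = (\<Sum>y\<in>UNIV. p y * L r y)"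

definition prop_loss :: "('r \<Rightarrow> 'y::finite \<Rightarrow> real) \<Rightarrow> ('y \<Rightarrow> real) \<Rightarrow> 'r set" where
  "prop_loss L p = {r. \<forall>r'. exp_loss L p r \<le> exp_loss L p r'}"

definition nonneg_loss :: "('r \<Rightarrow> 'y \<Rightarrow> real) \<Rightarrow> bool" where
  "nonneg_loss L \<longleftrightarrow> (\<forall>r y. 0 \<le> L r y)"

definition polyhedral_loss :: "(real^'d \<Rightarrow> 'y \<Rightarrow> real) \<Rightarrow> bool" where
  "polyhedral_loss L \<longleftrightarrow> nonneg_loss L \<and>
     (\<forall>y. \<exists>A :: ((real^'d) \<times> real) set. finite A \<and> A \<noteq> {} \<and>
          (\<forall>u. L u y = Max ((\<lambda>(a,b). a \<bullet> u + b) ` A)))"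

text \<open>Discrete loss: report set is a finite type.\<close>
definition discrete_loss :: "('r::finite \<Rightarrow> 'y \<Rightarrow> real) \<Rightarrow> bool" where
  "discrete_loss l \<longleftrightarrow> nonneg_loss l"

text \<open>Calibration of (L, psi) w.r.t. l.  The infimum over the empty set is +infinity,
  so the condition is stated with extended reals.\<close>
definition calibrated ::
  "(real^'d \<Rightarrow> 'y::finite \<Rightarrow> real) \<Rightarrow> (real^'d \<Rightarrow> 'r) \<Rightarrow> ('r \<Rightarrow> 'y \<Rightarrow> real) \<Rightarrow> bool" where
  "calibrated L psi l \<longleftrightarrow>
     (\<forall>p\<in>prob_simplex.
        (INF u\<in>{u. psi u \<notin> prop_loss l p}. ereal (exp_loss L p u))
          > (INF u\<in>UNIV. ereal (exp_loss L p u)))"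

definition linf_dist :: "real^'d \<Rightarrow> real^'d \<Rightarrow> real" where
  "linf_dist u v = Max (range (\<lambda>i. \<bar>u $ i - v $ i\<bar>))"

text \<open>d_inf(u, A) = inf_{a in A} ||u - a||_inf (as an extended real, +infinity for empty A).\<close>
definition linf_set_dist :: "real^'d \<Rightarrow> (real^'d) set \<Rightarrow> ereal" where
  "linf_set_dist u A = (INF a\<in>A. ereal (linf_dist u a))"

definition eps_separated ::
  "(real^'d \<Rightarrow> 'r) \<Rightarrow> (('y \<Rightarrow> real) \<Rightarrow> (real^'d) set) \<Rightarrow> (('y::finite \<Rightarrow> real) \<Rightarrow> 'r set) \<Rightarrow> real \<Rightarrow> bool" where
  "eps_separated psi Gam gam eps \<longleftrightarrow>
     (\<forall>u. \<forall>p\<in>prob_simplex. psi u \<notin> gam p \<longrightarrow> linf_set_dist u (Gam p) \<ge> ereal eps)"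

end

theory Submission
  imports Defs
begin


definition aff :: "((real^'d) \<times> real) \<Rightarrow> real^'d \<Rightarrow> real" where
  "aff h x = fst h \<bullet> x + snd h"

definition pmax :: "((real^'d) \<times> real) set \<Rightarrow> real^'d \<Rightarrow> real" where
  "pmax H x = Max ((\<lambda>h. aff h x) ` H)"

lemma pmax_ge: "finite H \<Longrightarrow> h \<in> H \<Longrightarrow> aff h x \<le> pmax H x"
  unfolding pmax_def by (rule Max_ge) auto

lemma pmax_in: "finite H \<Longrightarrow> H \<noteq> {} \<Longrightarrow> \<exists>h\<in>H. pmax H x = aff h x"
proof -
  assume "finite H" "H \<noteq> {}"
  then have "Max ((\<lambda>h. aff h x) ` H) \<in> (\<lambda>h. aff h x) ` H" by (intro Max_in) auto
  then show ?thesis unfolding pmax_def by auto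
qed

lemma aff_comb: "aff h ((1+e) *\<^sub>R u - e *\<^sub>R v) = (1+e) * aff h u - e * aff h v"
  by (simp add: aff_def inner_diff_right algebra_simps)

lemma sum_pmax:
  fixes A :: "'y \<Rightarrow> ((real^'d) \<times> real) set" and q :: "'y \<Rightarrow> real"
  assumes "\<And>y. finite (A y)" "\<And>y. A y \<noteq> {}" "\<And>y. 0 \<le> q y" "finite Y"
  shows "\<exists>H. finite H \<and> H \<noteq> {} \<and> (\<forall>x. (\<Sum>y\<in>Y. q y * pmax (A y) x) = pmax H x)"
  using assms(4)
proof (induction Y rule: finite_induct)
  case empty
  show ?case by (rule exI[of _ "{(0,0)}"]) (simp add: pmax_def aff_def)
next
  case (insert y Y)
  then obtain H where H: "finite H" "H \<noteq> {}" "\<And>x. (\<Sum>y\<in>Y. q y * pmax (A y) x) = pmax H x"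
    by blast
  define H' where "H' = (\<lambda>(h,g). (fst h + q y *\<^sub>R fst g, snd h + q y * snd g)) ` (H \<times> A y)"
  have fin: "finite H'" unfolding H'_def using H(1) assms(1) by simp
  have ne: "H' \<noteq> {}" unfolding H'_def using H(2) assms(2) by auto
  have eq: "pmax H' x = pmax H x + q y * pmax (A y) x" for x
  proof -
    obtain h0 where h0: "h0 \<in> H" "pmax H x = aff h0 x" using pmax_in[OF H(1) H(2)] by blast
    obtain g0 where g0: "g0 \<in> A y" "pmax (A y) x = aff g0 x" using pmax_in[OF assms(1) assms(2)] by blast
    have aff_s: "aff (fst h + q y *\<^sub>R fst g, snd h + q y * snd g) x = aff h x + q y * aff g x" for h g
      by (simp add: aff_def inner_add_left algebra_simps)
    show ?thesis unfolding pmax_def[of H']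
    proof (rule Max_eqI)
      show "finite ((\<lambda>h. aff h x) ` H')" using fin by simp
      show "z \<le> pmax H x + q y * pmax (A y) x" if "z \<in> (\<lambda>h. aff h x) ` H'" for z
      proof -
        from that obtain k' where k': "k' \<in> H'" "z = aff k' x" by blast
        from k'(1) obtain hg where hg1: "hg \<in> H \<times> A y"
            "k' = (\<lambda>(h,g). (fst h + q y *\<^sub>R fst g, snd h + q y * snd g)) hg"
          unfolding H'_def by (rule imageE)
        obtain h g where "hg = (h, g)" by (cases hg)
        with hg1 have hg0: "h \<in> H" "g \<in> A y" "k' = (fst h + q y *\<^sub>R fst g, snd h + q y * snd g)"
          by auto
        have hg: "h \<in> H" "g \<in> A y" "z = aff (fst h + q y *\<^sub>R fst g, snd h + q y * snd g) x"
          using hg0 k'(2) by auto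
        have "aff h x \<le> pmax H x" using pmax_ge H(1) hg(1) by blast
        moreover have "q y * aff g x \<le> q y * pmax (A y) x"
          using pmax_ge[OF assms(1) hg(2)] assms(3) by (simp add: mult_left_mono)
        ultimately show ?thesis using hg(3) aff_s[of h g] by linarith
      qed
      show "pmax H x + q y * pmax (A y) x \<in> (\<lambda>h. aff h x) ` H'"
      proof -
          have "(fst h0 + q y *\<^sub>R fst g0, snd h0 + q y * snd g0) \<in> H'"
          proof -
            have "(h0,g0) \<in> H \<times> A y" using h0(1) g0(1) by simp
            then have "(\<lambda>(h,g). (fst h + q y *\<^sub>R fst g, snd h + q y * snd g)) (h0,g0) \<in> H'"
              unfolding H'_def by (rule imageI)
            then show ?thesis by simp
          qed
          moreover have "pmax H x + q y * pmax (A y) x = aff (fst h0 + q y *\<^sub>R fst g0, snd h0 + q y * snd g0) x"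
            using h0(2) g0(2) aff_s by simp
          ultimately show ?thesis by (rule rev_image_eqI)
        qed
    qed
  qed
  have "(\<Sum>y\<in>insert y Y. q y * pmax (A y) x) = pmax H' x" for x
    using insert.hyps eq[of x] H(3)[of x] by simp
  then show ?case
    using fin ne by blast
qed

lemma linf_ge: "\<bar>u $ i - v $ i\<bar> \<le> linf_dist u v"
  unfolding linf_dist_def by (rule Max_ge) auto

lemma linf_nonneg: "0 \<le> linf_dist u v"
  using linf_ge[of u _ v] abs_ge_zero order_trans by blast

lemma linf_le_norm: "linf_dist u v \<le> norm (u - v)"
proof -
  have "Max (range (\<lambda>i. \<bar>u $ i - v $ i\<bar>)) \<in> range (\<lambda>i. \<bar>u $ i - v $ i\<bar>)"
    by (intro Max_in) auto
  then obtain i where "Max (range (\<lambda>i. \<bar>u $ i - v $ i\<bar>)) = (\<lambda>i. \<bar>u $ i - v $ i\<bar>) i"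
    by (rule rangeE)
  then have "linf_dist u v = \<bar>u $ i - v $ i\<bar>" unfolding linf_dist_def by simp
  then show ?thesis using component_le_norm_cart[of "u - v" i] by simp
qed

lemma pmax_lip:
  fixes H :: "((real^'d) \<times> real) set"
  assumes "finite H" "H \<noteq> {}"
  shows "\<exists>K>0. \<forall>u v. pmax H u - pmax H v \<le> K * linf_dist u v"
proof -
  define N where "N = (\<Sum>h\<in>H. norm (fst h))"
  have N0: "0 \<le> N" unfolding N_def by (simp add: sum_nonneg)
  have "pmax H u - pmax H v \<le> (N * real CARD('d)) * linf_dist u v" for u v
  proof -
    obtain h where h: "h \<in> H" "pmax H u = aff h u" using pmax_in assms by blast
    have "aff h v \<le> pmax H v" using pmax_ge assms h by blast
    then have "pmax H u - pmax H v \<le> fst h \<bullet> (u - v)"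
      using h by (simp add: aff_def inner_diff_right)
    also have "\<dots> \<le> norm (fst h) * norm (u - v)" by (rule norm_cauchy_schwarz)
    also have "\<dots> \<le> N * (real CARD('d) * linf_dist u v)"
    proof (rule mult_mono)
      show "norm (fst h) \<le> N" unfolding N_def
        using member_le_sum[of h H "\<lambda>h. norm (fst h)"] h assms by simp
      have "norm (u - v) \<le> (\<Sum>i\<in>UNIV. \<bar>(u - v) $ i\<bar>)" by (rule norm_le_l1_cart)
      also have "\<dots> \<le> (\<Sum>i\<in>(UNIV::'d set). linf_dist u v)"
        by (rule sum_mono) (simp add: linf_ge)
      finally show "norm (u - v) \<le> real CARD('d) * linf_dist u v" by simp
    qed (use N0 in auto)
    finally show ?thesis by simp
  qed
  moreover have "(N * real CARD('d)) * linf_dist u v \<le> (N * real CARD('d) + 1) * linf_dist u v" for u v :: "real^'d"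
    using linf_nonneg[of u v] by (simp add: distrib_right)
  ultimately have "\<forall>u v. pmax H u - pmax H v \<le> (N * real CARD('d) + 1) * linf_dist u v"
    by (meson order_trans)
  moreover have "N * real CARD('d) + 1 > 0" using N0 by (simp add: add_nonneg_pos)
  ultimately show ?thesis by blast
qed



lemma pmax_attain:
  fixes H :: "((real^'d) \<times> real) set"
  assumes H: "finite H" "H \<noteq> {}" and B: "\<And>x. B \<le> pmax H x"
  shows "\<exists>x0. \<forall>x. pmax H x0 \<le> pmax H x"
proof -
  define M where "M = Inf (range (pmax H))"
  have bdd: "bdd_below (range (pmax H))" using B by (intro bdd_belowI2)
  have Mle: "M \<le> pmax H x" for x unfolding M_def using bdd by (intro cInf_lower) auto
  define gen where "gen h = (fst h, M - snd h)" for h :: "(real^'d) \<times> real"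
  define K where "K = convex_cone hull (gen ` H)"
  have notin: "((0::real^'d), (-1::real)) \<notin> K"
  proof
    assume in0: "((0::real^'d), (-1::real)) \<in> K"
    define R where "R = {z. \<exists>lam. (\<forall>h. 0 \<le> lam h) \<and> z = (\<Sum>h\<in>H. lam h *\<^sub>R gen h)}"
    have "K \<subseteq> R" unfolding K_def
    proof (rule hull_minimal)
      show "gen ` H \<subseteq> R"
      proof
        fix z assume "z \<in> gen ` H"
        then obtain h where h: "h \<in> H" "z = gen h" by blast
        have "(\<Sum>k\<in>H. (if k = h then 1 else 0) *\<^sub>R gen k) = (\<Sum>k\<in>H. if k = h then gen k else 0)"
          by (rule sum.cong) auto
        also have "\<dots> = gen h" using h(1) H(1) by (simp add: sum.delta)
        finally have "(\<Sum>k\<in>H. (if k = h then 1 else 0) *\<^sub>R gen k) = gen h" .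
        then show "z \<in> R" unfolding R_def using h(2)
          by (intro CollectI exI[of _ "\<lambda>k. if k = h then 1 else 0"]) auto
      qed
      show "convex_cone R" unfolding convex_cone_iff
      proof (intro conjI ballI allI impI)
        show "0 \<in> R" unfolding R_def by (intro CollectI exI[of _ "\<lambda>k. 0"]) simp
      next
        fix x y assume "x \<in> R" "y \<in> R"
        then obtain l1 l2 where "\<forall>h. 0 \<le> l1 h" "x = (\<Sum>h\<in>H. l1 h *\<^sub>R gen h)"
          "\<forall>h. 0 \<le> l2 h" "y = (\<Sum>h\<in>H. l2 h *\<^sub>R gen h)" unfolding R_def by blast
        then show "x + y \<in> R" unfolding R_def
          by (intro CollectI exI[of _ "\<lambda>h. l1 h + l2 h"]) (simp add: scaleR_add_left sum.distrib)
      next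
        fix x :: "(real^'d) \<times> real" and c :: real assume "x \<in> R" "0 \<le> c"
        then obtain l1 where "\<forall>h. 0 \<le> l1 h" "x = (\<Sum>h\<in>H. l1 h *\<^sub>R gen h)" unfolding R_def by blast
        then show "c *\<^sub>R x \<in> R" unfolding R_def using \<open>0 \<le> c\<close>
          by (intro CollectI exI[of _ "\<lambda>h. c * l1 h"]) (simp add: scaleR_sum_right)
      qed
    qed
    with in0 obtain lam where lam: "\<forall>h. 0 \<le> lam h" "((0::real^'d), (-1::real)) = (\<Sum>h\<in>H. lam h *\<^sub>R gen h)"
      unfolding R_def by blast
    have c0: "(\<Sum>h\<in>H. lam h *\<^sub>R fst h) = 0"
      using arg_cong[OF lam(2), of fst] by (simp add: fst_sum gen_def)
    have d1: "(\<Sum>h\<in>H. lam h * (M - snd h)) = -1"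
      using arg_cong[OF lam(2), of snd] by (simp add: snd_sum gen_def)
    define \<Lambda> where "\<Lambda> = (\<Sum>h\<in>H. lam h)"
    have L0: "0 \<le> \<Lambda>" unfolding \<Lambda>_def using lam(1) by (intro sum_nonneg) blast
    have sd: "(\<Sum>h\<in>H. lam h * snd h) = \<Lambda> * M + 1"
      using d1 by (simp add: \<Lambda>_def right_diff_distrib sum_subtractf sum_distrib_right)
    have key: "\<Lambda> * M + 1 \<le> \<Lambda> * pmax H x" for x
    proof -
      have "(\<Sum>h\<in>H. lam h * aff h x) = (\<Sum>h\<in>H. lam h *\<^sub>R fst h) \<bullet> x + (\<Sum>h\<in>H. lam h * snd h)"
        by (simp add: aff_def inner_sum_left distrib_left sum.distrib)
      also have "\<dots> = \<Lambda> * M + 1" using c0 sd by simp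
      finally have "\<Lambda> * M + 1 = (\<Sum>h\<in>H. lam h * aff h x)" by simp
      also have "\<dots> \<le> (\<Sum>h\<in>H. lam h * pmax H x)"
        using lam(1) pmax_ge[OF H(1)] by (intro sum_mono mult_left_mono) auto
      also have "\<dots> = \<Lambda> * pmax H x" by (simp add: \<Lambda>_def sum_distrib_right)
      finally show ?thesis .
    qed
    show False
    proof (cases "\<Lambda> = 0")
      case True
      then show False using key[of 0] by simp
    next
      case False
      then have Lp: "0 < \<Lambda>" using L0 by simp
      have "M + 1 / \<Lambda> \<le> pmax H x" for x
        using key[of x] Lp by (simp add: field_simps)
      then have "M + 1 / \<Lambda> \<le> M" unfolding M_def[of] by (intro cInf_greatest) auto
      then show False using Lp by simp
    qed
  qed
  have cK: "closed K" unfolding K_def using H(1) by (intro closed_convex_cone_hull) simp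
  have vK: "convex K" unfolding K_def by (rule convex_convex_cone_hull)
  obtain a b where ab: "inner a ((0::real^'d), (-1::real)) < b" "\<forall>k\<in>K. b < inner a k"
    using separating_hyperplane_closed_point[OF vK cK notin] by blast
  have b0: "b < 0" using ab(2) convex_cone_hull_contains_0[of "gen ` H"] unfolding K_def by fastforce
  obtain w \<alpha> where wa: "a = (w, \<alpha>)" by (cases a)
  have al: "0 < \<alpha>" using ab(1) b0 wa by simp
  have gpos: "0 \<le> inner a (gen h)" if "h \<in> H" for h
  proof (rule ccontr)
    assume "\<not> 0 \<le> inner a (gen h)"
    then have neg: "inner a (gen h) < 0" by simp
    have "gen h \<in> K" unfolding K_def using that by (intro hull_inc) simp
    then have "(b / inner a (gen h)) *\<^sub>R gen h \<in> K" unfolding K_def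
      using b0 neg by (intro convex_cone_hull_mul) (auto simp: divide_nonpos_neg)
    then have "b < inner a ((b / inner a (gen h)) *\<^sub>R gen h)" using ab(2) by blast
    also have "\<dots> = b" using neg by simp
    finally show False by simp
  qed
  define x0 where "x0 = (- (1 / \<alpha>)) *\<^sub>R w"
  have "aff h x0 \<le> M" if "h \<in> H" for h
  proof -
    have "0 \<le> w \<bullet> fst h + \<alpha> * (M - snd h)" using gpos[OF that] wa by (simp add: gen_def)
    then have "- (w \<bullet> fst h) / \<alpha> \<le> M - snd h" using al by (simp add: field_simps)
    then show ?thesis unfolding aff_def x0_def using al
      by (simp add: inner_commute field_simps)
  qed
  moreover obtain h where "h \<in> H" "pmax H x0 = aff h x0" using pmax_in[OF H] by blast
  ultimately have "pmax H x0 \<le> M" by simp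
  then show ?thesis using Mle by (meson order_trans)
qed


lemma cone_pos:
  fixes C :: "(real^'d) set"
  assumes "finite C"
  shows "\<exists>c>0. \<forall>z\<in>convex_cone hull C. norm z = 1 \<longrightarrow> (\<exists>a\<in>C. c \<le> a \<bullet> z)"
proof -
  let ?K = "convex_cone hull C"
  have pos: "\<exists>a\<in>C. 0 < a \<bullet> z" if "z \<in> ?K" "z \<noteq> 0" for z
  proof (rule ccontr)
    assume "\<not> (\<exists>a\<in>C. 0 < a \<bullet> z)"
    then have "C \<subseteq> {k. z \<bullet> k \<le> 0}" by (auto simp: inner_commute not_less)
    then have "?K \<subseteq> {k. z \<bullet> k \<le> 0}" by (rule hull_minimal) (rule convex_cone_halfspace_le)
    then have "z \<bullet> z \<le> 0" using that(1) by auto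
    moreover have "0 < z \<bullet> z" using that(2) by (simp add: inner_gt_zero_iff)
    ultimately show False by simp
  qed
  define Z where "Z = ?K \<inter> sphere 0 1"
  have cZ: "compact Z" unfolding Z_def using closed_convex_cone_hull[OF assms]
    by (simp add: closed_Int_compact compact_sphere)
  define g where "g z = (\<Sum>a\<in>C. max 0 (a \<bullet> z))" for z
  have gc: "continuous_on Z g" unfolding g_def by (intro continuous_intros)
  show ?thesis
  proof (cases "Z = {}")
    case True
    then show ?thesis by (intro exI[of _ 1]) (auto simp: Z_def)
  next
    case False
    obtain z0 where z0: "z0 \<in> Z" "\<forall>z\<in>Z. g z0 \<le> g z"
      using continuous_attains_inf[OF cZ False gc] by blast
    have z0K: "z0 \<in> ?K" "z0 \<noteq> 0" using z0(1) by (auto simp: Z_def)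
    obtain a0 where a0: "a0 \<in> C" "0 < a0 \<bullet> z0" using pos z0K by blast
    have "max 0 (a0 \<bullet> z0) \<le> g z0" unfolding g_def
      using a0(1) assms by (intro member_le_sum) auto
    then have g0: "0 < g z0" using a0(2) by simp
    have Cne: "C \<noteq> {}" using a0(1) by auto
    have cardp: "0 < real (card C)" using Cne assms by (simp add: card_gt_0_iff)
    define c where "c = g z0 / real (card C)"
    have c0: "c > 0" unfolding c_def using g0 cardp by simp
    show ?thesis
    proof (intro exI[of _ c] conjI ballI impI c0)
      fix z assume zK: "z \<in> ?K" "norm z = 1"
      then have zZ: "z \<in> Z" by (simp add: Z_def)
      show "\<exists>a\<in>C. c \<le> a \<bullet> z"
      proof (rule ccontr)
        assume "\<not> (\<exists>a\<in>C. c \<le> a \<bullet> z)"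
        then have lt: "\<forall>a\<in>C. max 0 (a \<bullet> z) < c" using c0 by (auto simp: not_le)
        have "g z < (\<Sum>a\<in>C. c)" unfolding g_def using lt assms Cne by (intro sum_strict_mono) auto
        also have "\<dots> = g z0" using cardp by (simp add: c_def)
        finally show False using z0(2) zZ by force
      qed
    qed
  qed
qed

lemma pmax_sharp:
  fixes H :: "((real^'d) \<times> real) set"
  assumes H: "finite H" "H \<noteq> {}" and x0: "\<forall>x. pmax H x0 \<le> pmax H x"
  shows "\<exists>c>0. \<forall>u. \<exists>s. pmax H s = pmax H x0 \<and> c * norm (u - s) \<le> pmax H u - pmax H x0"
proof -
  define m where "m = pmax H x0"
  define S where "S = (\<Inter>h\<in>H. {x. fst h \<bullet> x \<le> m - snd h})"
  have S_iff: "x \<in> S \<longleftrightarrow> (\<forall>h\<in>H. aff h x \<le> m)" for x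
    by (auto simp: S_def aff_def algebra_simps)
  have Sm: "pmax H x = m" if "x \<in> S" for x
  proof -
    obtain h where "h \<in> H" "pmax H x = aff h x" using pmax_in[OF H] by blast
    then have "pmax H x \<le> m" using that S_iff by auto
    then show ?thesis using x0 m_def by (simp add: antisym)
  qed
  have cS: "closed S" unfolding S_def by (intro closed_INT ballI closed_halfspace_le)
  have x0S: "x0 \<in> S" using S_iff pmax_ge[OF H(1)] m_def by blast
  have "\<forall>J\<in>Pow H. \<exists>c. c > 0 \<and> (\<forall>z\<in>convex_cone hull (fst ` J). norm z = 1 \<longrightarrow> (\<exists>a\<in>fst ` J. c \<le> a \<bullet> z))"
  proof
    fix J assume "J \<in> Pow H"
    then have "finite (fst ` J)" using H(1) by (auto intro: finite_subset)
    then show "\<exists>c. c > 0 \<and> (\<forall>z\<in>convex_cone hull (fst ` J). norm z = 1 \<longrightarrow> (\<exists>a\<in>fst ` J. c \<le> a \<bullet> z))"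
      using cone_pos by blast
  qed
  then obtain cf where cf: "\<forall>J\<in>Pow H. cf J > 0 \<and> (\<forall>z\<in>convex_cone hull (fst ` J). norm z = 1 \<longrightarrow> (\<exists>a\<in>fst ` J. cf J \<le> a \<bullet> z))"
    by (rule bchoice[elim_format]) blast
  define c where "c = Min (cf ` Pow H)"
  have finP: "finite (cf ` Pow H)" using H(1) by simp
  have c0: "c > 0"
  proof -
    have "c \<in> cf ` Pow H" unfolding c_def using finP by (intro Min_in) auto
    then show ?thesis using cf by auto
  qed
  have cle: "c \<le> cf J" if "J \<subseteq> H" for J
    unfolding c_def using finP that by (intro Min_le) auto
  show ?thesis
  proof (intro exI[of _ c] conjI allI c0)
    fix u
    obtain s where s: "s \<in> S" "\<And>y. y \<in> S \<Longrightarrow> dist u s \<le> dist u y"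
      using distance_attains_inf[OF cS, of u] x0S by blast
    define w where "w = u - s"
    have ps: "pmax H s = m" using Sm s(1) .
    show "\<exists>s. pmax H s = pmax H x0 \<and> c * norm (u - s) \<le> pmax H u - pmax H x0"
    proof (intro exI[of _ s] conjI)
      show "pmax H s = pmax H x0" using ps m_def by simp
      show "c * norm (u - s) \<le> pmax H u - pmax H x0"
      proof (cases "w = 0")
        case True
        then show ?thesis using x0 by (simp add: w_def)
      next
        case False
        define J where "J = {h\<in>H. aff h s = m}"
        have JH: "J \<subseteq> H" unfolding J_def by auto
        have finJ: "finite (fst ` J)" using H(1) JH by (auto intro: finite_subset)
        let ?K = "convex_cone hull (fst ` J)"
        have wK: "w \<in> ?K"
        proof (rule ccontr)
          assume "w \<notin> ?K"
          then obtain a b where ab: "inner a w < b" "\<forall>k\<in>?K. b < inner a k"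
            using separating_hyperplane_closed_point[OF convex_convex_cone_hull closed_convex_cone_hull[OF finJ]]
            by blast
          have b0: "b < 0" using ab(2) convex_cone_hull_contains_0[of "fst ` J"] by fastforce
          have aJ: "0 \<le> inner a (fst h)" if "h \<in> J" for h
          proof (rule ccontr)
            assume "\<not> 0 \<le> inner a (fst h)"
            then have neg: "inner a (fst h) < 0" by simp
            have "fst h \<in> ?K" using that by (intro hull_inc) simp
            then have "(b / inner a (fst h)) *\<^sub>R fst h \<in> ?K"
              using b0 neg by (intro convex_cone_hull_mul) (auto simp: divide_nonpos_neg)
            then have "b < inner a ((b / inner a (fst h)) *\<^sub>R fst h)" using ab(2) by blast
            also have "\<dots> = b" using neg by simp
            finally show False by simp
          qed
          define z where "z = - a"
          have zw: "0 < z \<bullet> w" using ab(1) b0 by (simp add: z_def)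
          have zJ: "fst h \<bullet> z \<le> 0" if "h \<in> J" for h
            using aJ[OF that] by (simp add: z_def inner_commute)
          have affl: "aff h (s + t *\<^sub>R z) = aff h s + t * (fst h \<bullet> z)" for h t
            by (simp add: aff_def inner_add_right algebra_simps)
          have ev1: "\<forall>\<^sub>F t in at_right 0. \<forall>h\<in>H - J. aff h (s + t *\<^sub>R z) < m"
          proof (rule eventually_ball_finite)
            show "finite (H - J)" using H(1) by simp
            show "\<forall>h\<in>H - J. \<forall>\<^sub>F t in at_right 0. aff h (s + t *\<^sub>R z) < m"
            proof
              fix h assume h: "h \<in> H - J"
              have "aff h s \<le> m" using pmax_ge[OF H(1)] h ps by fastforce
              moreover have "aff h s \<noteq> m" using h by (simp add: J_def)
              ultimately have lt: "aff h s < m" by simp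
              have "((\<lambda>t. aff h s + t * (fst h \<bullet> z)) \<longlongrightarrow> aff h s + 0 * (fst h \<bullet> z)) (at_right 0)"
                by (intro tendsto_intros)
              then have "((\<lambda>t. aff h s + t * (fst h \<bullet> z)) \<longlongrightarrow> aff h s) (at_right 0)" by simp
              from order_tendstoD(2)[OF this lt]
              show "\<forall>\<^sub>F t in at_right 0. aff h (s + t *\<^sub>R z) < m" by (simp add: affl)
            qed
          qed
          have ev2: "\<forall>\<^sub>F t in at_right 0. t * (z \<bullet> z) < 2 * (z \<bullet> w)"
          proof -
            have "((\<lambda>t. t * (z \<bullet> z)) \<longlongrightarrow> 0 * (z \<bullet> z)) (at_right 0)"
              by (intro tendsto_intros)
            then have "((\<lambda>t. t * (z \<bullet> z)) \<longlongrightarrow> 0) (at_right 0)" by simp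
            from order_tendstoD(2)[OF this] show ?thesis using zw by simp
          qed
          have ev3: "\<forall>\<^sub>F t in at_right (0::real). 0 < t" by (rule eventually_at_right_less)
          have "\<forall>\<^sub>F t in at_right (0::real). (\<forall>h\<in>H - J. aff h (s + t *\<^sub>R z) < m) \<and> t * (z \<bullet> z) < 2 * (z \<bullet> w) \<and> 0 < t"
            using ev1 ev2 ev3 by (intro eventually_conj)
          then obtain t where t: "\<forall>h\<in>H - J. aff h (s + t *\<^sub>R z) < m" "t * (z \<bullet> z) < 2 * (z \<bullet> w)" "0 < t"
            using eventually_happens' trivial_limit_at_right_real by blast
          define s' where "s' = s + t *\<^sub>R z"
          have "s' \<in> S" unfolding S_iff
          proof
            fix h assume h: "h \<in> H"
            show "aff h s' \<le> m"
            proof (cases "h \<in> J")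
              case True
              then have "aff h s = m" by (simp add: J_def)
              moreover have "t * (fst h \<bullet> z) \<le> 0" using zJ[OF True] t(3) by (simp add: mult_nonneg_nonpos)
              ultimately show ?thesis by (simp add: s'_def affl)
            next
              case False
              then show ?thesis using t(1) h by (simp add: s'_def less_imp_le)
            qed
          qed
          have "(norm (u - s'))\<^sup>2 = (norm w)\<^sup>2 - t * (2 * (z \<bullet> w) - t * (z \<bullet> z))"
            unfolding s'_def w_def power2_norm_eq_inner
            by (simp add: inner_diff_left inner_diff_right inner_add_left inner_add_right inner_commute algebra_simps)
          also have "\<dots> < (norm w)\<^sup>2" using t(2) t(3) by simp
          finally have "norm (u - s') < norm w" by (simp add: power_less_imp_less_base)
          then have "dist u s' < dist u s" by (simp add: dist_norm w_def)
          then show False using s(2)[OF \<open>s' \<in> S\<close>] by simp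
        qed
        have nw: "0 < norm w" using False by simp
        have "(1 / norm w) *\<^sub>R w \<in> ?K" using wK by (rule convex_cone_hull_mul) simp
        moreover have "norm ((1 / norm w) *\<^sub>R w) = 1" using nw by simp
        ultimately obtain a where a: "a \<in> fst ` J" "cf J \<le> a \<bullet> ((1 / norm w) *\<^sub>R w)"
          using cf JH by blast
        then obtain h where h: "h \<in> J" "a = fst h" by blast
        have "cf J * norm w \<le> fst h \<bullet> w" using a(2) h(2) nw by (simp add: field_simps)
        moreover have "c * norm w \<le> cf J * norm w" using cle[OF JH] nw by (simp add: mult_right_mono)
        moreover have "aff h u = m + fst h \<bullet> w"
          using h(1) by (simp add: J_def aff_def w_def inner_diff_right)
        moreover have "aff h u \<le> pmax H u" using pmax_ge[OF H(1)] h(1) JH by blast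
        ultimately show ?thesis by (simp add: w_def m_def)
      qed
    qed
  qed
qed


lemma poly_repr:
  fixes L :: "real^'d \<Rightarrow> 'y \<Rightarrow> real"
  assumes "polyhedral_loss L"
  shows "\<exists>A. \<forall>y. finite (A y) \<and> A y \<noteq> {} \<and> (\<forall>u. L u y = pmax (A y) u)"
proof -
  have fe: "(\<lambda>(a,b). a \<bullet> u + b) = (\<lambda>h. aff h u)" for u :: "real^'d"
    by (auto simp: aff_def fun_eq_iff)
  from assms have "\<forall>y. \<exists>A. finite A \<and> A \<noteq> {} \<and> (\<forall>u. L u y = pmax A u)"
    unfolding polyhedral_loss_def pmax_def fe by blast
  then show ?thesis by (rule choice)
qed

lemma sign_class:
  fixes A :: "'y::finite \<Rightarrow> ((real^'d) \<times> real) set" and L :: "real^'d \<Rightarrow> 'y \<Rightarrow> real"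
  assumes A: "\<And>y. finite (A y)" "\<And>y. A y \<noteq> {}" "\<And>y u. L u y = pmax (A y) u"
    and sv: "\<And>y a b. a \<in> A y \<Longrightarrow> b \<in> A y \<Longrightarrow> sgn (aff a u - aff b u) = sgn (aff a v - aff b v)"
    and u: "u \<in> prop_loss L p"
  shows "v \<in> prop_loss L p"
proof -
  have "\<forall>y. \<exists>a. a \<in> A y \<and> pmax (A y) u = aff a u" using pmax_in[OF A(1) A(2)] by blast
  then obtain al where al: "\<And>y. al y \<in> A y" "\<And>y. pmax (A y) u = aff (al y) u" by metis
  have geu: "aff b u \<le> aff (al y) u" if "b \<in> A y" for y b
    using pmax_ge[OF A(1) that, of u] al(2)[of y] by simp
  have gev: "aff b v \<le> aff (al y) v" if "b \<in> A y" for y b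
  proof -
    have "sgn (aff (al y) u - aff b u) = sgn (aff (al y) v - aff b v)" using sv[OF al(1) that] .
    then show ?thesis using geu[OF that] by (auto simp: sgn_if split: if_splits)
  qed
  define wf where "wf e = (1+e) *\<^sub>R u - e *\<^sub>R v" for e :: real
  define D where "D = Sigma UNIV A"
  have finD: "finite D" unfolding D_def using A(1) by (intro finite_SigmaI) auto
  have ev: "\<forall>\<^sub>F e in at_right 0. \<forall>k\<in>D. aff (snd k) (wf e) \<le> aff (al (fst k)) (wf e)"
  proof (rule eventually_ball_finite[OF finD], rule ballI)
    fix k assume k: "k \<in> D"
    obtain y b where kyb: "k = (y, b)" by (cases k)
    have b: "b \<in> A y" using k kyb by (simp add: D_def)
    define du where "du = aff (al y) u - aff b u"
    define dv where "dv = aff (al y) v - aff b v"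
    have du0: "0 \<le> du" using geu[OF b] by (simp add: du_def)
    have sg: "sgn du = sgn dv" using sv[OF al(1) b] by (simp add: du_def dv_def)
    have dw: "aff (al y) (wf e) - aff b (wf e) = (1+e) * du - e * dv" for e
      unfolding wf_def aff_comb du_def dv_def by (simp add: algebra_simps)
    show "\<forall>\<^sub>F e in at_right 0. aff (snd k) (wf e) \<le> aff (al (fst k)) (wf e)"
    proof (cases "du = 0")
      case True
      then have "dv = 0" using sg by (simp add: sgn_0_0)
      then have "aff (snd k) (wf e) \<le> aff (al (fst k)) (wf e)" for e
        using dw[of e] True kyb by simp
      then show ?thesis by simp
    next
      case False
      then have dup: "0 < du" using du0 by simp
      have "((\<lambda>e. (1+e) * du - e * dv) \<longlongrightarrow> (1+0) * du - 0 * dv) (at_right 0)"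
        by (intro tendsto_intros)
      then have "((\<lambda>e. (1+e) * du - e * dv) \<longlongrightarrow> du) (at_right 0)" by simp
      from order_tendstoD(1)[OF this dup]
      have "\<forall>\<^sub>F e in at_right 0. 0 < (1+e) * du - e * dv" .
      then show ?thesis
      proof (rule eventually_mono)
        fix e assume "0 < (1+e) * du - e * dv"
        then show "aff (snd k) (wf e) \<le> aff (al (fst k)) (wf e)" using dw[of e] kyb by simp
      qed
    qed
  qed
  have "\<forall>\<^sub>F e in at_right (0::real). (\<forall>k\<in>D. aff (snd k) (wf e) \<le> aff (al (fst k)) (wf e)) \<and> 0 < e"
    using ev eventually_at_right_less by (rule eventually_conj)
  then obtain e where e: "\<forall>k\<in>D. aff (snd k) (wf e) \<le> aff (al (fst k)) (wf e)" "0 < e"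
    using eventually_happens' trivial_limit_at_right_real by blast
  have gew: "aff b (wf e) \<le> aff (al y) (wf e)" if "b \<in> A y" for y b
    using e(1) that by (auto simp: D_def)
  have Lx: "L x y = aff (al y) x" if "\<And>b. b \<in> A y \<Longrightarrow> aff b x \<le> aff (al y) x" for x y
  proof -
    obtain h where "h \<in> A y" "pmax (A y) x = aff h x" using pmax_in[OF A(1) A(2)] by blast
    then have "pmax (A y) x \<le> aff (al y) x" using that by simp
    moreover have "aff (al y) x \<le> pmax (A y) x" using pmax_ge[OF A(1) al(1)] .
    ultimately show ?thesis using A(3) by simp
  qed
  define F where "F x = (\<Sum>y\<in>UNIV. p y * aff (al y) x)" for x
  have Eu: "exp_loss L p u = F u" unfolding exp_loss_def F_def using Lx[OF geu] by simp
  have Ev: "exp_loss L p v = F v" unfolding exp_loss_def F_def using Lx[OF gev] by simp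
  have Ew: "exp_loss L p (wf e) = F (wf e)" unfolding exp_loss_def F_def using Lx[OF gew] by simp
  have Fw: "F (wf e) = (1+e) * F u - e * F v"
    unfolding F_def wf_def aff_comb
    by (simp add: algebra_simps sum.distrib sum_distrib_left sum_subtractf)
  have umin: "\<forall>r. exp_loss L p u \<le> exp_loss L p r" using u by (simp add: prop_loss_def)
  have "F u \<le> F (wf e)" using umin Eu Ew by metis
  then have "e * F v \<le> e * F u" using Fw by (simp add: algebra_simps)
  then have "F v \<le> F u" using e(2) by simp
  then show ?thesis using umin Eu Ev unfolding prop_loss_def by (auto intro: order_trans)
qed

lemma prop_range_finite:
  fixes A :: "'y::finite \<Rightarrow> ((real^'d) \<times> real) set" and L :: "real^'d \<Rightarrow> 'y \<Rightarrow> real"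
  assumes A: "\<And>y. finite (A y)" "\<And>y. A y \<noteq> {}" "\<And>y u. L u y = pmax (A y) u"
  shows "finite (range (prop_loss L))"
proof -
  define D where "D = Sigma UNIV (\<lambda>y. A y \<times> A y)"
  have finD: "finite D" unfolding D_def using A(1) by (intro finite_SigmaI) auto
  define sv where "sv x = (\<lambda>k. if k \<in> D then sgn (aff (fst (snd k)) x - aff (snd (snd k)) x) else (0::real))" for x
  have eq: "prop_loss L p = sv -` (sv ` prop_loss L p)" for p
  proof
    show "prop_loss L p \<subseteq> sv -` sv ` prop_loss L p" by auto
    show "sv -` sv ` prop_loss L p \<subseteq> prop_loss L p"
    proof
      fix x assume "x \<in> sv -` sv ` prop_loss L p"
      then obtain u where u: "u \<in> prop_loss L p" "sv x = sv u" by auto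
      show "x \<in> prop_loss L p"
      proof (rule sign_class[OF A _ u(1)])
        fix y a b assume ab: "a \<in> A y" "b \<in> A y"
        then have "(y, a, b) \<in> D" by (simp add: D_def)
        then show "sgn (aff a u - aff b u) = sgn (aff a x - aff b x)"
          using fun_cong[OF u(2), of "(y,a,b)"] by (simp add: sv_def)
      qed
    qed
  qed
  define S3 where "S3 = {-1, 0, 1::real}"
  have sg3: "sgn (r::real) \<in> S3" for r
    unfolding S3_def by (cases "r < 0"; cases "r = 0") (auto simp: sgn_if)
  have "range sv \<subseteq> {f. \<forall>k. (k \<in> D \<longrightarrow> f k \<in> S3) \<and> (k \<notin> D \<longrightarrow> f k = 0)}"
    unfolding sv_def using sg3 by auto
  moreover have "finite {f. \<forall>k. (k \<in> D \<longrightarrow> f k \<in> S3) \<and> (k \<notin> D \<longrightarrow> f k = (0::real))}"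
    using finite_set_of_finite_funs[OF finD, of S3 0] by (simp add: S3_def)
  ultimately have finsv: "finite (range sv)" by (rule finite_subset)
  have "range (prop_loss L) \<subseteq> (\<lambda>T. sv -` T) ` Pow (range sv)"
  proof
    fix G assume "G \<in> range (prop_loss L)"
    then obtain p where "G = prop_loss L p" by blast
    then show "G \<in> (\<lambda>T. sv -` T) ` Pow (range sv)" using eq[of p] by blast
  qed
  then show ?thesis using finsv by (meson finite_Pow_iff finite_imageI finite_subset)
qed


theorem theorem5:
  fixes L :: "real^'d \<Rightarrow> 'y::finite \<Rightarrow> real"
    and l :: "'r::finite \<Rightarrow> 'y \<Rightarrow> real"
    and psi :: "real^'d \<Rightarrow> 'r"
  assumes "polyhedral_loss L"
    and "discrete_loss l"
  shows "calibrated L psi l \<longleftrightarrow>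
         (\<exists>eps>0. eps_separated psi (prop_loss L) (prop_loss l) eps)"
proof -
  obtain A where A0: "\<forall>y. finite (A y) \<and> A y \<noteq> {} \<and> (\<forall>u. L u y = pmax (A y) u)"
    using poly_repr[OF assms(1)] by blast
  have A: "\<And>y. finite (A y)" "\<And>y. A y \<noteq> {}" "\<And>y u. L u y = pmax (A y) u"
    using A0 by auto
  have nonnegL: "\<And>u y. 0 \<le> L u y" using assms(1) by (simp add: polyhedral_loss_def nonneg_loss_def)
  have pnn: "\<And>y. 0 \<le> p y" if "p \<in> prob_simplex" for p using that by (simp add: prob_simplex_def)
  have exp_H: "\<exists>H. finite H \<and> H \<noteq> {} \<and> (\<forall>x. exp_loss L p x = pmax H x)" if p: "p \<in> prob_simplex" for p
  proof -
    have "\<exists>H. finite H \<and> H \<noteq> {} \<and> (\<forall>x. (\<Sum>y\<in>UNIV. p y * pmax (A y) x) = pmax H x)"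
      by (rule sum_pmax[of A p]) (auto simp: A(1) A(2) pnn[OF p])
    then obtain H where H: "finite H" "H \<noteq> {}" "\<forall>x. (\<Sum>y\<in>UNIV. p y * pmax (A y) x) = pmax H x"
      by blast
    have "exp_loss L p x = pmax H x" for x using H(3) A(3) by (simp add: exp_loss_def)
    then show ?thesis using H(1,2) by blast
  qed
  show ?thesis
  proof
    assume cal: "calibrated L psi l"
    have per: "\<exists>e>0. \<forall>u. psi u \<notin> prop_loss l p \<longrightarrow> ereal e \<le> linf_set_dist u (prop_loss L p)"
      if p: "p \<in> prob_simplex" for p
    proof -
      obtain H where H: "finite H" "H \<noteq> {}" "\<forall>x. exp_loss L p x = pmax H x" using exp_H[OF p] by blast
      obtain K where K: "K > 0" "\<forall>u v. pmax H u - pmax H v \<le> K * linf_dist u v"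
        using pmax_lip[OF H(1) H(2)] by blast
      show ?thesis
      proof (cases "prop_loss L p = {}")
        case True
        then show ?thesis by (intro exI[of _ 1]) (simp add: linf_set_dist_def)
      next
        case False
        then obtain v0 where v0: "v0 \<in> prop_loss L p" by blast
        have v0min: "\<forall>r. exp_loss L p v0 \<le> exp_loss L p r" using v0 by (simp add: prop_loss_def)
        have INFall: "(INF u\<in>UNIV. ereal (exp_loss L p u)) = ereal (exp_loss L p v0)"
        proof (rule antisym)
          show "(INF u\<in>UNIV. ereal (exp_loss L p u)) \<le> ereal (exp_loss L p v0)" by (rule INF_lower) simp
          show "ereal (exp_loss L p v0) \<le> (INF u\<in>UNIV. ereal (exp_loss L p u))"
            using v0min by (intro INF_greatest) simp
        qed
        have "(INF u\<in>{u. psi u \<notin> prop_loss l p}. ereal (exp_loss L p u)) > ereal (exp_loss L p v0)"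
        proof -
          have "(INF u\<in>UNIV. ereal (exp_loss L p u)) < (INF u\<in>{u. psi u \<notin> prop_loss l p}. ereal (exp_loss L p u))"
            using cal p unfolding calibrated_def by blast
          then show ?thesis unfolding INFall .
        qed
        then obtain c where c: "ereal (exp_loss L p v0) < ereal c"
          "ereal c < (INF u\<in>{u. psi u \<notin> prop_loss l p}. ereal (exp_loss L p u))"
          using ereal_dense2 by blast
        define e where "e = (c - exp_loss L p v0) / K"
        have e0: "e > 0" using c(1) K(1) by (simp add: e_def)
        show ?thesis
        proof (intro exI[of _ e] conjI allI impI e0)
          fix u assume bad: "psi u \<notin> prop_loss l p"
          have "(INF u\<in>{u. psi u \<notin> prop_loss l p}. ereal (exp_loss L p u)) \<le> ereal (exp_loss L p u)"
            using bad by (intro INF_lower) simp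
          with c(2) have "ereal c < ereal (exp_loss L p u)" by (rule order.strict_trans2)
          then have fu: "c < exp_loss L p u" by simp
          show "ereal e \<le> linf_set_dist u (prop_loss L p)" unfolding linf_set_dist_def
          proof (rule INF_greatest)
            fix v assume v: "v \<in> prop_loss L p"
            have "exp_loss L p v \<le> exp_loss L p v0" using v by (simp add: prop_loss_def)
            then have fv: "exp_loss L p v = exp_loss L p v0" using v0min by (simp add: antisym)
            have "exp_loss L p u - exp_loss L p v \<le> K * linf_dist u v" using K(2) H(3) by simp
            then have "c - exp_loss L p v0 \<le> K * linf_dist u v" using fu fv by simp
            then have "e \<le> linf_dist u v" using K(1) by (simp add: e_def divide_le_eq mult.commute)
            then show "ereal e \<le> ereal (linf_dist u v)" by simp
          qed
        qed
      qed
    qed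
    define Q where "Q = (\<lambda>p. (prop_loss L p, prop_loss l p)) ` prob_simplex"
    have "Q \<subseteq> range (prop_loss L) \<times> UNIV" unfolding Q_def by auto
    moreover have "finite (range (prop_loss L) \<times> (UNIV :: 'r set set))"
      using prop_range_finite[of A L, OF A(1) A(2) A(3)] by simp
    ultimately have finQ: "finite Q" by (rule finite_subset)
    have "\<forall>q\<in>Q. \<exists>e. e > 0 \<and> (\<forall>u. psi u \<notin> snd q \<longrightarrow> ereal e \<le> linf_set_dist u (fst q))"
      using per by (auto simp: Q_def)
    then obtain ef where ef: "\<forall>q\<in>Q. ef q > 0 \<and> (\<forall>u. psi u \<notin> snd q \<longrightarrow> ereal (ef q) \<le> linf_set_dist u (fst q))"
      by (rule bchoice[elim_format]) blast
    define eps where "eps = Min (insert 1 (ef ` Q))"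
    have eps0: "eps > 0"
    proof -
      have "eps \<in> insert 1 (ef ` Q)" unfolding eps_def using finQ by (intro Min_in) auto
      then show ?thesis using ef by auto
    qed
    have "eps_separated psi (prop_loss L) (prop_loss l) eps"
      unfolding eps_separated_def
    proof (intro allI ballI impI)
      fix u p assume p: "p \<in> prob_simplex" and bad: "psi u \<notin> prop_loss l p"
      let ?q = "(prop_loss L p, prop_loss l p)"
      have q: "?q \<in> Q" using p by (simp add: Q_def)
      have "eps \<le> ef ?q" unfolding eps_def using finQ q by (intro Min_le) auto
      then have "ereal eps \<le> ereal (ef ?q)" by simp
      also have "ereal (ef ?q) \<le> linf_set_dist u (prop_loss L p)" using ef q bad by auto
      finally show "ereal eps \<le> linf_set_dist u (prop_loss L p)" .
    qed
    then show "\<exists>eps>0. eps_separated psi (prop_loss L) (prop_loss l) eps" using eps0 by blast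
  next
    assume "\<exists>eps>0. eps_separated psi (prop_loss L) (prop_loss l) eps"
    then obtain eps where eps: "eps > 0" "eps_separated psi (prop_loss L) (prop_loss l) eps" by blast
    show "calibrated L psi l" unfolding calibrated_def
    proof
      fix p :: "'y \<Rightarrow> real" assume p: "p \<in> prob_simplex"
      obtain H where H: "finite H" "H \<noteq> {}" "\<forall>x. exp_loss L p x = pmax H x" using exp_H[OF p] by blast
      have nn: "0 \<le> pmax H x" for x
      proof -
        have "0 \<le> exp_loss L p x" unfolding exp_loss_def
          using pnn[OF p] nonnegL by (intro sum_nonneg mult_nonneg_nonneg) auto
        then show ?thesis using H(3) by simp
      qed
      obtain x0 where x0: "\<forall>x. pmax H x0 \<le> pmax H x" using pmax_attain[OF H(1) H(2) nn] by blast
      obtain c where c: "c > 0" "\<forall>u. \<exists>s. pmax H s = pmax H x0 \<and> c * norm (u - s) \<le> pmax H u - pmax H x0"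
        using pmax_sharp[OF H(1) H(2) x0] by blast
      define m where "m = pmax H x0"
      have INFall: "(INF u\<in>UNIV. ereal (exp_loss L p u)) = ereal m"
      proof (rule antisym)
        show "(INF u\<in>UNIV. ereal (exp_loss L p u)) \<le> ereal m"
          using H(3) m_def by (intro INF_lower2[of x0]) auto
        show "ereal m \<le> (INF u\<in>UNIV. ereal (exp_loss L p u))"
          using x0 H(3) m_def by (intro INF_greatest) simp
      qed
      have "ereal (m + c * eps) \<le> (INF u\<in>{u. psi u \<notin> prop_loss l p}. ereal (exp_loss L p u))"
      proof (rule INF_greatest)
        fix u assume "u \<in> {u. psi u \<notin> prop_loss l p}"
        then have bad: "psi u \<notin> prop_loss l p" by simp
        obtain s where s: "pmax H s = m" "c * norm (u - s) \<le> pmax H u - m"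
          using c(2) m_def by blast
        have sG: "s \<in> prop_loss L p" using s(1) x0 H(3) m_def by (simp add: prop_loss_def)
        have "ereal eps \<le> linf_set_dist u (prop_loss L p)"
          using eps(2) p bad by (simp add: eps_separated_def)
        also have "\<dots> \<le> ereal (linf_dist u s)" unfolding linf_set_dist_def by (rule INF_lower) (rule sG)
        finally have "eps \<le> linf_dist u s" by simp
        then have "eps \<le> norm (u - s)" using linf_le_norm[of u s] by simp
        then have "c * eps \<le> c * norm (u - s)" using c(1) by simp
        then show "ereal (m + c * eps) \<le> ereal (exp_loss L p u)" using s(2) H(3) by simp
      qed
      moreover have "ereal m < ereal (m + c * eps)" using c(1) eps(1) by simp
      ultimately show "(INF u\<in>UNIV. ereal (exp_loss L p u))
                       < (INF u\<in>{u. psi u \<notin> prop_loss l p}. ereal (exp_loss L p u))"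
        unfolding INFall by (rule order.strict_trans2[rotated])
    qed
  qed
qed

end
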